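(* Let $k\ge 2$ and $G=\Theta(2,2,2k)$ with end vertices $u$ and $v$. Let $m\ge 4$ and let $L$ be an $m$-assignment for $G$ with $L(u)\ne L(v)$. Then $P(G,L)\ge P(G,m)$.
   Context: $\Theta(l_1,l_2,l_3)$ denotes two end vertices joined by three internally disjoint paths of lengths $l_1,l_2,l_3$. An $m$-assignment $L$ assigns to each vertex $w$ a set $L(w)$ of $m$ colors; $P(G,L)$ is the number of proper colorings $f$ of $G$ with $f(w)\in L(w)$ for all $w$. $P(G,m)$ is the chromatic polynomial of $G$. *)

theory Defs
  imports Main
begin

(* Vertices of a theta graph: the two end vertices and internal vertices
   TI i j = j-th internal vertex (1 <= j < l_i) on path i (i in {0,1,2}). *)
datatype tvert = TU | TV | TI nat nat

definition theta_len :: "nat \<Rightarrow> nat \<Rightarrow> nat \<Rightarrow> nat \<Rightarrow> nat" where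
  "theta_len l1 l2 l3 i = (if i = 0 then l1 else if i = 1 then l2 else l3)"

definition theta_verts :: "nat \<Rightarrow> nat \<Rightarrow> nat \<Rightarrow> tvert set" where
  "theta_verts l1 l2 l3 = {TU, TV} \<union>
     {TI i j | i j. i < 3 \<and> 1 \<le> j \<and> j < theta_len l1 l2 l3 i}"

definition theta_pos :: "nat \<Rightarrow> nat \<Rightarrow> nat \<Rightarrow> nat \<Rightarrow> tvert \<Rightarrow> nat option" where
  "theta_pos l1 l2 l3 i x = (case x of
      TU \<Rightarrow> Some 0
    | TV \<Rightarrow> Some (theta_len l1 l2 l3 i)
    | TI i' j \<Rightarrow> (if i' = i \<and> 1 \<le> j \<and> j < theta_len l1 l2 l3 i then Some j else None))"

definition theta_edge :: "nat \<Rightarrow> nat \<Rightarrow> nat \<Rightarrow> tvert \<Rightarrow> tvert \<Rightarrow> bool" where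
  "theta_edge l1 l2 l3 x y = (\<exists>i<3. \<exists>a b. theta_pos l1 l2 l3 i x = Some a \<and>
       theta_pos l1 l2 l3 i y = Some b \<and> (b = a + 1 \<or> a = b + 1))"

(* proper L-colorings of a graph (V,E); functions are fixed to undefined off V
   so that distinct colorings correspond to distinct functions *)
definition list_colorings :: "'v set \<Rightarrow> ('v \<Rightarrow> 'v \<Rightarrow> bool) \<Rightarrow> ('v \<Rightarrow> 'c set) \<Rightarrow> ('v \<Rightarrow> 'c) set" where
  "list_colorings V E L = {f. (\<forall>x\<in>V. f x \<in> L x) \<and>
      (\<forall>x\<in>V. \<forall>y\<in>V. E x y \<longrightarrow> f x \<noteq> f y) \<and> (\<forall>x. x \<notin> V \<longrightarrow> f x = undefined)}"

definition num_list_colorings :: "'v set \<Rightarrow> ('v \<Rightarrow> 'v \<Rightarrow> bool) \<Rightarrow> ('v \<Rightarrow> 'c set) \<Rightarrow> nat" where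
  "num_list_colorings V E L = card (list_colorings V E L)"

definition chrom_poly :: "'v set \<Rightarrow> ('v \<Rightarrow> 'v \<Rightarrow> bool) \<Rightarrow> nat \<Rightarrow> nat" where
  "chrom_poly V E m = card (list_colorings V E (\<lambda>_. {0..<m::nat}))"

definition is_m_assignment :: "'v set \<Rightarrow> nat \<Rightarrow> ('v \<Rightarrow> 'c set) \<Rightarrow> bool" where
  "is_m_assignment V m L = (\<forall>x\<in>V. finite (L x) \<and> card (L x) = m)"

end

theory Submission
  imports Defs
begin

definition pathcol :: "'c \<Rightarrow> 'c set list \<Rightarrow> 'c list set" where
  "pathcol c Ls = {xs. length xs = length Ls \<and> (\<forall>i<length Ls. xs!i \<in> Ls!i \<and> xs!i \<noteq> (c#xs)!i)}"

definition Qc :: "'c \<Rightarrow> 'c \<Rightarrow> 'c set list \<Rightarrow> nat" where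
  "Qc c c2 Ls = card {xs \<in> pathcol c Ls. last (c#xs) \<noteq> c2}"

lemma pathcol_finite:
  assumes "\<forall>L\<in>set Ls. finite L"
  shows "finite (pathcol c Ls)"
proof -
  have "pathcol c Ls \<subseteq> {xs. set xs \<subseteq> \<Union>(set Ls) \<and> length xs = length Ls}"
    by (auto simp: pathcol_def in_set_conv_nth) (metis nth_mem)
  moreover have "finite {xs. set xs \<subseteq> \<Union>(set Ls) \<and> length xs = length Ls}"
    using assms by (intro finite_lists_length_eq) auto
  ultimately show ?thesis by (rule finite_subset)
qed

lemma Qc_Nil: "Qc c c2 [] = (if c \<noteq> c2 then 1 else 0)"
proof -
  have "pathcol c [] = {[]}" by (auto simp: pathcol_def)
  then show ?thesis by (auto simp: Qc_def)
qed

lemma pathcol_Cons_eq: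
  "{xs \<in> pathcol c (L#Ls). last (c#xs) \<noteq> c2} =
   (\<lambda>(x,ys). x#ys) ` (SIGMA x:L-{c}. {ys \<in> pathcol x Ls. last (x#ys) \<noteq> c2})"
proof (rule set_eqI, rule iffI)
  fix xs assume xs: "xs \<in> {xs \<in> pathcol c (L#Ls). last (c#xs) \<noteq> c2}"
  then obtain x ys where e: "xs = x#ys" by (cases xs) (auto simp: pathcol_def)
  have h: "\<forall>i<Suc (length Ls). (x#ys)!i \<in> (L#Ls)!i \<and> (x#ys)!i \<noteq> (c#x#ys)!i"
    and l: "length ys = length Ls" using xs e by (auto simp: pathcol_def)
  have "x \<in> L - {c}" using h[rule_format, of 0] by auto
  moreover have "ys \<in> pathcol x Ls"
    unfolding pathcol_def using l h by fastforce
  moreover have "last (x#ys) \<noteq> c2" using xs e by auto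
  ultimately show "xs \<in> (\<lambda>(x,ys). x#ys) ` (SIGMA x:L-{c}. {ys \<in> pathcol x Ls. last (x#ys) \<noteq> c2})"
    using e by auto
next
  fix xs assume "xs \<in> (\<lambda>(x,ys). x#ys) ` (SIGMA x:L-{c}. {ys \<in> pathcol x Ls. last (x#ys) \<noteq> c2})"
  then obtain x ys where e: "xs = x#ys" and x: "x \<in> L" "x \<noteq> c" and ys: "ys \<in> pathcol x Ls"
    and la: "last (x#ys) \<noteq> c2" by auto
  have "xs \<in> pathcol c (L#Ls)"
    unfolding pathcol_def e
  proof (intro CollectI conjI allI impI)
    show "length (x#ys) = length (L#Ls)" using ys by (auto simp: pathcol_def)
  next
    fix i assume "i < length (L#Ls)"
    then show "(x#ys)!i \<in> (L#Ls)!i" using x ys by (cases i) (auto simp: pathcol_def)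
  next
    fix i assume "i < length (L#Ls)"
    then show "(x#ys)!i \<noteq> (c#x#ys)!i" using x ys by (cases i) (auto simp: pathcol_def)
  qed
  then show "xs \<in> {xs \<in> pathcol c (L#Ls). last (c#xs) \<noteq> c2}" using e la by auto
qed

lemma Qc_Cons:
  assumes "finite L" "\<forall>L\<in>set Ls. finite L"
  shows "Qc c c2 (L#Ls) = (\<Sum>x\<in>L-{c}. Qc x c2 Ls)"
proof -
  have "Qc c c2 (L#Ls) = card (SIGMA x:L-{c}. {ys \<in> pathcol x Ls. last (x#ys) \<noteq> c2})"
    unfolding Qc_def pathcol_Cons_eq
    by (rule card_image) (auto simp: inj_on_def)
  also have "\<dots> = (\<Sum>x\<in>L-{c}. Qc x c2 Ls)"
    unfolding Qc_def using assms
    by (subst card_SigmaI) (auto intro: finite_subset[OF _ pathcol_finite[of Ls]])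
  finally show ?thesis .
qed


fun Dd :: "int \<Rightarrow> nat \<Rightarrow> int" where
  "Dd m 0 = 0"
| "Dd m (Suc n) = (m-1)^n - Dd m n"

definition eps :: "nat \<Rightarrow> int" where "eps n = (if odd n then 1 else 0)"

lemma Dd_closed: "m * Dd m n = (m-1)^n - (-1)^n"
  by (induction n) (auto simp: algebra_simps)

lemma Dd_eps: "m * Dd m n + eps (n + 1) = (m-1)^n + eps n"
  using Dd_closed[of m n] by (auto simp: eps_def)

declare Dd.simps(2)[simp del]

lemma Dd_nonneg: assumes "m \<ge> 2" shows "Dd m n \<ge> 0"
proof -
  have "(m-1)^n \<ge> 1" using assms by simp
  moreover have "(-1::int)^n \<le> 1" by (cases "even n") auto
  ultimately have "m * Dd m n \<ge> 0" using Dd_closed[of m n] by linarith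
  then show ?thesis using assms by (simp add: zero_le_mult_iff)
qed

lemma sum_swap_id:
  fixes q :: "'c \<Rightarrow> int"
  assumes "finite L" "finite Y" "card Y \<ge> 1"
  shows "(\<Sum>c\<in>Y. \<Sum>x\<in>L-{c}. q x) = (int (card Y) - 1) * (\<Sum>x\<in>L. q x) + (\<Sum>x\<in>L-Y. q x)"
proof -
  have "(\<Sum>c\<in>Y. \<Sum>x\<in>L-{c}. q x) = (\<Sum>c\<in>Y. (\<Sum>x\<in>L. q x) - (if c \<in> L then q c else 0))"
    using assms by (intro sum.cong) (auto simp: sum_diff1)
  also have "\<dots> = int (card Y) * (\<Sum>x\<in>L. q x) - (\<Sum>c\<in>Y \<inter> L. q c)"
    using assms by (simp add: sum_subtractf sum.If_cases Int_commute)
  finally have 1: "(\<Sum>c\<in>Y. \<Sum>x\<in>L-{c}. q x) = int (card Y) * (\<Sum>x\<in>L. q x) - (\<Sum>c\<in>Y \<inter> L. q c)" .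
  have 2: "(\<Sum>x\<in>L. q x) = (\<Sum>x\<in>L \<inter> Y. q x) + (\<Sum>x\<in>L-Y. q x)"
    using assms by (metis sum.Int_Diff)
  show ?thesis unfolding 1 using 2 by (simp add: algebra_simps Int_commute)
qed

lemma path_inv:
  assumes m2: "m \<ge> 2" and Ls: "\<forall>L\<in>set Ls. finite L \<and> card L = m"
  shows "(\<forall>Y. finite Y \<and> card Y = m \<longrightarrow>
            (\<Sum>c\<in>Y. int (Qc c c2 Ls)) \<ge> (int m - 1)^(length Ls + 1)) \<and>
         (\<forall>Y. finite Y \<and> 1 \<le> card Y \<and> card Y < m \<longrightarrow>
            (\<Sum>c\<in>Y. int (Qc c c2 Ls)) + eps (length Ls + 1) \<ge> int (card Y) * Dd (int m) (length Ls + 1))"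
  using Ls
proof (induction Ls)
  case Nil
  have base: "(\<Sum>c\<in>Y. int (Qc c c2 [])) \<ge> int (card Y) - 1" if "finite Y" for Y :: "'a set"
  proof -
    have "(\<Sum>c\<in>Y. int (Qc c c2 [])) = (\<Sum>c\<in>Y. if c \<noteq> c2 then 1 else 0)"
      by (intro sum.cong) (auto simp: Qc_Nil)
    also have "\<dots> = int (card (Y - {c2}))"
      using that by (simp add: sum.If_cases Diff_eq Int_commute Compl_eq)
    also have "\<dots> \<ge> int (card Y) - 1"
      using that by (cases "c2 \<in> Y") (auto simp: card_Diff_singleton_if of_nat_diff card_gt_0_iff)
    finally show ?thesis .
  qed
  show ?case using base by (auto simp: eps_def Dd.simps) (smt (verit) base)
next
  case (Cons L Ls)
  let ?n = "length Ls + 1"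
  let ?X = "(int m - 1)^?n"
  let ?D = "Dd (int m) ?n"
  define q where "q x = int (Qc x c2 Ls)" for x
  have fL: "finite L" and cL: "card L = m" using Cons.prems by auto
  have IH: "\<And>Y. finite Y \<Longrightarrow> card Y = m \<Longrightarrow> (\<Sum>c\<in>Y. q c) \<ge> ?X"
       "\<And>Y. finite Y \<Longrightarrow> 1 \<le> card Y \<Longrightarrow> card Y < m \<Longrightarrow> (\<Sum>c\<in>Y. q c) + eps ?n \<ge> int (card Y) * ?D"
    using Cons by (auto simp: q_def)
  have fin: "\<forall>L\<in>set Ls. finite L" using Cons.prems by auto
  have expand: "(\<Sum>c\<in>Y. int (Qc c c2 (L#Ls))) = (int (card Y) - 1) * (\<Sum>x\<in>L. q x) + (\<Sum>x\<in>L-Y. q x)"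
    if "finite Y" "card Y \<ge> 1" for Y
  proof -
    have "(\<Sum>c\<in>Y. int (Qc c c2 (L#Ls))) = (\<Sum>c\<in>Y. \<Sum>x\<in>L-{c}. q x)"
      using fL fin by (simp add: Qc_Cons q_def)
    then show ?thesis using sum_swap_id[OF fL that] by simp
  qed
  have SL: "(\<Sum>x\<in>L. q x) \<ge> ?X" using IH(1)[OF fL cL] .
  have qnn: "(\<Sum>x\<in>W. q x) \<ge> 0" for W by (simp add: q_def sum_nonneg)
  have Dnn: "?D \<ge> 0" by (rule Dd_nonneg) (use m2 in simp)
  have Dnext: "Dd (int m) (?n + 1) = ?X - ?D" by (simp add: Dd.simps)
  have Xnext: "(int m - 1)^(?n+1) = (int m - 1) * ?X" by simp
  have key: "int m * ?D + eps (?n+1) = ?X + eps ?n" by (rule Dd_eps)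
  have epsnn: "eps j \<ge> 0" "eps j \<le> 1" for j by (auto simp: eps_def)
  show ?case
  proof (intro conjI allI impI)
    fix Y :: "'a set" assume Y: "finite Y \<and> card Y = m"
    have a1: "(\<Sum>c\<in>Y. int (Qc c c2 (L#Ls))) \<ge> (int m - 1) * (\<Sum>x\<in>L. q x)"
      using expand[of Y] Y m2 qnn[of "L-Y"] by simp
    have a2: "(int m - 1) * (\<Sum>x\<in>L. q x) \<ge> (int m - 1) * ?X"
      using SL m2 by (intro mult_left_mono) auto
    have a3: "(int m - 1)^(length (L#Ls) + 1) = (int m - 1) * ?X" by simp
    show "(\<Sum>c\<in>Y. int (Qc c c2 (L#Ls))) \<ge> (int m - 1)^(length (L#Ls) + 1)"
      unfolding a3 using a1 a2 by linarith
  next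
    fix Y :: "'a set" assume Y: "finite Y \<and> 1 \<le> card Y \<and> card Y < m"
    define r where "r = card Y"
    have r1: "r \<ge> 1" "r < m" using Y r_def by auto
    have e: "(\<Sum>c\<in>Y. int (Qc c c2 (L#Ls))) = (int r - 1) * (\<Sum>x\<in>L. q x) + (\<Sum>x\<in>L-Y. q x)"
      using expand[of Y] Y r_def by simp
    have A: "(int r - 1) * (\<Sum>x\<in>L. q x) \<ge> (int r - 1) * ?X"
      using SL r1 by (intro mult_left_mono) auto
    have cW: "card (L - Y) \<ge> m - r"
    proof -
      have "card (L \<inter> Y) \<le> r" using Y r_def by (simp add: card_mono)
      moreover have "card (L - Y) = m - card (L \<inter> Y)"
        using fL cL by (metis card_Diff_subset_Int Diff_Diff_Int Diff_subset card_Diff_subset finite_Int inf.commute Int_lower1)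
      ultimately show ?thesis by simp
    qed
    have cW2: "card (L - Y) \<le> m" using cL fL by (metis card_mono Diff_subset)
    show "(\<Sum>c\<in>Y. int (Qc c c2 (L#Ls))) + eps (length (L#Ls) + 1) \<ge> int (card Y) * Dd (int m) (length (L#Ls) + 1)"
    proof (cases "card (L - Y) = m")
      case True
      then have "L - Y = L" using fL cL by (metis Diff_subset card_subset_eq)
      then have "(\<Sum>c\<in>Y. int (Qc c c2 (L#Ls))) = int r * (\<Sum>x\<in>L. q x)"
        using e by (simp add: algebra_simps)
      also have "\<dots> \<ge> int r * ?X" using SL by (intro mult_left_mono) auto
      finally have "(\<Sum>c\<in>Y. int (Qc c c2 (L#Ls))) \<ge> int r * ?X" .
      moreover have "int r * ?X \<ge> int r * (?X - ?D)" using Dnn by (intro mult_left_mono) auto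
      moreover have "int (card Y) * Dd (int m) (length (L#Ls) + 1) = int r * (?X - ?D)"
        using Dnext r_def by simp
      ultimately show ?thesis using epsnn[of "length (L#Ls) + 1"] by linarith
    next
      case False
      then have W: "1 \<le> card (L - Y)" "card (L - Y) < m" using cW cW2 r1 by auto
      have B: "(\<Sum>x\<in>L-Y. q x) + eps ?n \<ge> int (card (L-Y)) * ?D"
        using IH(2)[OF _ W] fL by simp
      have C: "int (card (L-Y)) * ?D \<ge> (int m - int r) * ?D"
        using cW r1 Dnn by (intro mult_right_mono) auto
      have "(\<Sum>c\<in>Y. int (Qc c c2 (L#Ls))) + eps (?n+1) \<ge> (int r - 1) * ?X + (int m - int r) * ?D - eps ?n + eps (?n + 1)"
        using e A B C by linarith
      also have "(int r - 1) * ?X + (int m - int r) * ?D - eps ?n + eps (?n + 1) = int r * (?X - ?D)"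
        using key by (simp add: algebra_simps)
      moreover have "int (card Y) * Dd (int m) (length (L#Ls) + 1) = int r * (?X - ?D)"
        using Dnext r_def by simp
      ultimately show ?thesis by simp
    qed
  qed
qed


lemma path_full:
  assumes m1: "m \<ge> 1" and c2: "c2 < m" and Ls: "\<forall>L\<in>set Ls. L = {0..<m::nat}"
  shows "\<forall>c<m. int (Qc c c2 Ls) = (if c = c2 then (int m - 1)^(length Ls + 1) - (int m - 1) * Dd (int m) (length Ls + 1)
                                    else Dd (int m) (length Ls + 1))"
  using Ls
proof (induction Ls)
  case Nil
  then show ?case by (auto simp: Qc_Nil Dd.simps)
next
  case (Cons L Ls)
  let ?X = "(int m - 1)^(length Ls + 1)"
  let ?D = "Dd (int m) (length Ls + 1)"
  have L: "L = {0..<m}" using Cons.prems by auto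
  have IH: "\<And>x. x < m \<Longrightarrow> int (Qc x c2 Ls) = (if x = c2 then ?X - (int m - 1) * ?D else ?D)"
    using Cons by auto
  have fin: "\<forall>L\<in>set Ls. finite L" using Cons.prems by auto
  have Dnext: "Dd (int m) (length Ls + 1 + 1) = ?X - ?D" by (simp add: Dd.simps)
  show ?case
  proof (intro allI impI)
    fix c assume c: "c < m"
    have "int (Qc c c2 (L#Ls)) = (\<Sum>x\<in>{0..<m}-{c}. int (Qc x c2 Ls))"
      using fin L by (simp add: Qc_Cons)
    also have "\<dots> = (\<Sum>x\<in>{0..<m}-{c}. if x = c2 then ?X - (int m - 1) * ?D else ?D)"
      using IH by (intro sum.cong) auto
    also have "\<dots> = (if c = c2 then (int m - 1) * ?D else ?X - (int m - 1) * ?D + (int m - 2) * ?D)"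
    proof (cases "c = c2")
      case True
      then have "(\<Sum>x\<in>{0..<m}-{c}. if x = c2 then ?X - (int m - 1) * ?D else ?D) = (\<Sum>x\<in>{0..<m}-{c}. ?D)"
        by (intro sum.cong) auto
      then show ?thesis using True c by (simp add: of_nat_diff)
    next
      case False
      have "(\<Sum>x\<in>{0..<m}-{c}. if x = c2 then ?X - (int m - 1) * ?D else ?D)
            = (?X - (int m - 1) * ?D) * int (card (({0..<m}-{c}) \<inter> {x. x = c2})) + ?D * int (card (({0..<m}-{c}) - {x. x = c2}))"
        by (simp add: sum.If_cases Diff_eq Compl_eq)
      also have "({0..<m}-{c}) \<inter> {x. x = c2} = {c2}" using False c2 by auto
      also have "({0..<m}-{c}) - {x. x = c2} = {0..<m} - {c, c2}" by auto
      also have "card ({0..<m} - {c, c2}) = m - 2" using False c c2 by (simp add: card_Diff_subset)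
      finally show ?thesis using False c c2 by (simp add: of_nat_diff algebra_simps)
    qed
    also have "\<dots> = (if c = c2 then (int m - 1)^(length (L#Ls) + 1) - (int m - 1) * Dd (int m) (length (L#Ls) + 1)
                                    else Dd (int m) (length (L#Ls) + 1))"
    proof -
      have e1: "(int m - 1)^(length (L#Ls) + 1) = (int m - 1) * ?X" by simp
      have e2: "Dd (int m) (length (L#Ls) + 1) = ?X - ?D" using Dnext by simp
      show ?thesis unfolding e1 e2 by (cases "c = c2") (simp_all add: algebra_simps)
    qed
    finally show "int (Qc c c2 (L#Ls)) = (if c = c2 then (int m - 1)^(length (L#Ls) + 1) - (int m - 1) * Dd (int m) (length (L#Ls) + 1)
                                    else Dd (int m) (length (L#Ls) + 1))" .
  qed
qed

lemma tl_simps[simp]: "theta_len 2 2 n 0 = 2" "theta_len 2 2 n (Suc 0) = 2" "theta_len 2 2 n 2 = n"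
  by (auto simp: theta_len_def)

lemma verts_char: "x \<in> theta_verts 2 2 n \<longleftrightarrow>
   x = TU \<or> x = TV \<or> x = TI 0 1 \<or> x = TI 1 1 \<or> (\<exists>j. x = TI 2 j \<and> 1 \<le> j \<and> j < n)"
proof
  assume "x \<in> theta_verts 2 2 n"
  then show "x = TU \<or> x = TV \<or> x = TI 0 1 \<or> x = TI 1 1 \<or> (\<exists>j. x = TI 2 j \<and> 1 \<le> j \<and> j < n)"
  proof -
    assume "x \<in> theta_verts 2 2 n"
    then consider "x = TU" | "x = TV" | i j where "x = TI i j" "i < 3" "1 \<le> j" "j < theta_len 2 2 n i"
      unfolding theta_verts_def by blast
    then show ?thesis
    proof cases
      case 3
      then show ?thesis by (cases i; simp; rename_tac i'; case_tac i'; simp; rename_tac i''; case_tac i''; simp add: theta_len_def)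
    qed auto
  qed
next
  assume "x = TU \<or> x = TV \<or> x = TI 0 1 \<or> x = TI 1 1 \<or> (\<exists>j. x = TI 2 j \<and> 1 \<le> j \<and> j < n)"
  then show "x \<in> theta_verts 2 2 n"
    unfolding theta_verts_def theta_len_def by auto
qed

lemma edges:
  "theta_edge 2 2 n TU (TI 0 1)" "theta_edge 2 2 n (TI 0 1) TV"
  "theta_edge 2 2 n TU (TI 1 1)" "theta_edge 2 2 n (TI 1 1) TV"
  "n \<ge> 2 \<Longrightarrow> theta_edge 2 2 n TU (TI 2 1)"
  "1 \<le> j \<Longrightarrow> j + 1 < n \<Longrightarrow> theta_edge 2 2 n (TI 2 j) (TI 2 (j+1))"
  "n \<ge> 2 \<Longrightarrow> theta_edge 2 2 n (TI 2 (n-1)) TV"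
proof -
  show "theta_edge 2 2 n TU (TI 0 1)" unfolding theta_edge_def
    by (rule exI[of _ 0]) (simp add: theta_pos_def)
  show "theta_edge 2 2 n (TI 0 1) TV" unfolding theta_edge_def
    by (rule exI[of _ 0]) (simp add: theta_pos_def)
  show "theta_edge 2 2 n TU (TI 1 1)" unfolding theta_edge_def
    by (rule exI[of _ 1]) (simp add: theta_pos_def)
  show "theta_edge 2 2 n (TI 1 1) TV" unfolding theta_edge_def
    by (rule exI[of _ 1]) (simp add: theta_pos_def)
  show "n \<ge> 2 \<Longrightarrow> theta_edge 2 2 n TU (TI 2 1)" unfolding theta_edge_def
    by (rule exI[of _ 2]) (simp add: theta_pos_def)
  show "1 \<le> j \<Longrightarrow> j + 1 < n \<Longrightarrow> theta_edge 2 2 n (TI 2 j) (TI 2 (j+1))" unfolding theta_edge_def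
    by (rule exI[of _ 2]) (simp add: theta_pos_def)
  show "n \<ge> 2 \<Longrightarrow> theta_edge 2 2 n (TI 2 (n-1)) TV" unfolding theta_edge_def
    by (rule exI[of _ 2]) (simp add: theta_pos_def)
qed


definition mkcol :: "nat \<Rightarrow> 'c \<Rightarrow> 'c \<Rightarrow> 'c \<Rightarrow> 'c \<Rightarrow> 'c list \<Rightarrow> tvert \<Rightarrow> 'c" where
  "mkcol n c1 c2 xa xb xs x = (if x \<in> theta_verts 2 2 n then (case x of TU \<Rightarrow> c1 | TV \<Rightarrow> c2
      | TI i j \<Rightarrow> if i = 0 then xa else if i = 1 then xb else xs!(j-1)) else undefined)"

definition seqc :: "nat \<Rightarrow> 'c \<Rightarrow> 'c \<Rightarrow> 'c \<Rightarrow> 'c \<Rightarrow> 'c list \<Rightarrow> nat \<Rightarrow> nat \<Rightarrow> 'c" where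
  "seqc n c1 c2 xa xb xs i a = (if a = 0 then c1 else if a = theta_len 2 2 n i then c2
      else if i = 0 then xa else if i = 1 then xb else xs!(a-1))"

lemma len_ge2: "n \<ge> 2 \<Longrightarrow> theta_len 2 2 n i \<ge> 2"
  by (auto simp: theta_len_def)

lemma pos_seq:
  assumes "n \<ge> 2" "i < 3" "theta_pos 2 2 n i x = Some a"
  shows "mkcol n c1 c2 xa xb xs x = seqc n c1 c2 xa xb xs i a \<and> a \<le> theta_len 2 2 n i"
proof (cases x)
  case TU
  then show ?thesis using assms by (auto simp: theta_pos_def mkcol_def seqc_def verts_char)
next
  case TV
  then show ?thesis using assms len_ge2[of n i] by (auto simp: theta_pos_def mkcol_def seqc_def verts_char)
next
  case (TI i' j)
  then have h: "i' = i" "1 \<le> j" "j < theta_len 2 2 n i" "a = j"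
    using assms by (auto simp: theta_pos_def split: if_splits)
  then have "x \<in> theta_verts 2 2 n" using TI assms unfolding theta_verts_def by auto
  then show ?thesis using TI h by (auto simp: mkcol_def seqc_def)
qed

lemma seq_adj:
  assumes n: "n \<ge> 2" and xa: "xa \<noteq> c1" "xa \<noteq> c2" and xb: "xb \<noteq> c1" "xb \<noteq> c2"
    and xs: "xs \<in> pathcol c1 Ls" and lLs: "length Ls = n - 1" and la: "last (c1#xs) \<noteq> c2"
    and i: "i < 3" and a: "a < theta_len 2 2 n i"
  shows "seqc n c1 c2 xa xb xs i a \<noteq> seqc n c1 c2 xa xb xs i (Suc a)"
proof -
  have lxs: "length xs = n - 1" and P: "\<And>j. j < n - 1 \<Longrightarrow> xs!j \<noteq> (c1#xs)!j"
    using xs lLs by (auto simp: pathcol_def)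
  consider "i = 0" | "i = 1" | "i = 2" using i by linarith
  then show ?thesis
  proof cases
    case 1
    then have "a = 0 \<or> a = 1" using a by (simp add: theta_len_def less_2_cases_iff)
    then show ?thesis using 1 xa by (auto simp: seqc_def theta_len_def)
  next
    case 2
    then have "a = 0 \<or> a = 1" using a by (simp add: theta_len_def less_2_cases_iff)
    then show ?thesis using 2 xb by (auto simp: seqc_def theta_len_def)
  next
    case 3
    then have an: "a < n" using a by simp
    show ?thesis
    proof (cases "a = 0")
      case True
      then show ?thesis using 3 P[of 0] n by (auto simp: seqc_def)
    next
      case False
      show ?thesis
      proof (cases "Suc a = n")
        case True
        have "xs \<noteq> []" using lxs n by auto
        then have "last (c1#xs) = xs!(n-2)" using lxs n by (simp add: last_conv_nth numeral_2_eq_2)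
        then show ?thesis using 3 True False la by (auto simp: seqc_def)
      next
        case F2: False
        have "xs!a \<noteq> xs!(a-1)" using P[of a] an F2 False by (cases a) auto
        then show ?thesis using 3 F2 False an by (auto simp: seqc_def)
      qed
    qed
  qed
qed

definition phi :: "nat \<Rightarrow> (tvert \<Rightarrow> 'c) \<Rightarrow> 'c \<times> 'c \<times> 'c \<times> 'c \<times> 'c list" where
  "phi n f = (f TU, f TV, f (TI 0 1), f (TI 1 1), map (\<lambda>i. f (TI 2 i)) [1..<n])"

definition Tset :: "nat \<Rightarrow> (tvert \<Rightarrow> 'c set) \<Rightarrow> ('c \<times> 'c \<times> 'c \<times> 'c \<times> 'c list) set" where
  "Tset n L = (SIGMA c1:L TU. SIGMA c2:L TV. (L (TI 0 1) - {c1,c2}) \<times> (L (TI 1 1) - {c1,c2}) \<times>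
      {xs \<in> pathcol c1 (map (\<lambda>i. L (TI 2 i)) [1..<n]). last (c1#xs) \<noteq> c2})"

lemma phi_inj: "inj_on (phi n) (list_colorings (theta_verts 2 2 n) (theta_edge 2 2 n) L)"
proof (rule inj_onI)
  fix f g assume f: "f \<in> list_colorings (theta_verts 2 2 n) (theta_edge 2 2 n) L"
    and g: "g \<in> list_colorings (theta_verts 2 2 n) (theta_edge 2 2 n) L" and e: "phi n f = phi n g"
  show "f = g"
  proof
    fix x
    show "f x = g x"
    proof (cases "x \<in> theta_verts 2 2 n")
      case False
      then show ?thesis using f g by (auto simp: list_colorings_def)
    next
      case True
      have m: "map (\<lambda>i. f (TI 2 i)) [1..<n] = map (\<lambda>i. g (TI 2 i)) [1..<n]" using e by (simp add: phi_def)
      show ?thesis using True e m unfolding verts_char by (auto simp: phi_def map_eq_conv)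
    qed
  qed
qed


lemma phi_into:
  assumes n: "n \<ge> 2" and f: "f \<in> list_colorings (theta_verts 2 2 n) (theta_edge 2 2 n) L"
  shows "phi n f \<in> Tset n L"
proof -
  let ?V = "theta_verts 2 2 n" and ?E = "theta_edge 2 2 n"
  have inL: "\<And>x. x \<in> ?V \<Longrightarrow> f x \<in> L x" and pr: "\<And>x y. x \<in> ?V \<Longrightarrow> y \<in> ?V \<Longrightarrow> ?E x y \<Longrightarrow> f x \<noteq> f y"
    using f by (auto simp: list_colorings_def)
  have V: "TU \<in> ?V" "TV \<in> ?V" "TI 0 1 \<in> ?V" "TI 1 1 \<in> ?V" "\<And>j. 1 \<le> j \<Longrightarrow> j < n \<Longrightarrow> TI 2 j \<in> ?V"
    by (auto simp: verts_char)
  define xs where "xs = map (\<lambda>i. f (TI 2 i)) [1..<n]"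
  define Ls where "Ls = map (\<lambda>i. L (TI 2 i)) [1..<n]"
  have lxs: "length xs = n - 1" "length Ls = n - 1" by (auto simp: xs_def Ls_def)
  have nth: "\<And>i. i < n - 1 \<Longrightarrow> xs!i = f (TI 2 (Suc i))" "\<And>i. i < n - 1 \<Longrightarrow> Ls!i = L (TI 2 (Suc i))"
    by (auto simp: xs_def Ls_def nth_map_upt)
  have pc: "xs \<in> pathcol (f TU) Ls"
    unfolding pathcol_def
  proof (intro CollectI conjI allI impI)
    show "length xs = length Ls" using lxs by simp
  next
    fix i assume "i < length Ls"
    then have i: "i < n - 1" using lxs by simp
    then show "xs!i \<in> Ls!i" using nth[OF i] inL V(5)[of "Suc i"] by auto
  next
    fix i assume "i < length Ls"
    then have i: "i < n - 1" using lxs by simp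
    show "xs!i \<noteq> (f TU # xs)!i"
    proof (cases i)
      case 0
      then show ?thesis using nth(1)[OF i] pr[OF V(1) V(5)[of 1] edges(5)[OF n]] n by auto
    next
      case (Suc j)
      have "f (TI 2 (Suc j)) \<noteq> f (TI 2 (Suc j + 1))"
        using pr[OF V(5) V(5) edges(6)[of "Suc j" n]] i Suc by auto
      then show ?thesis using nth(1)[OF i] nth(1)[of j] i Suc by auto
    qed
  qed
  have "xs \<noteq> []" using lxs n by auto
  moreover have "Suc (n-2) = n-1" using n by arith
  ultimately have "last (f TU # xs) = f (TI 2 (n-1))"
    using lxs n nth(1)[of "n-2"] by (simp add: last_conv_nth numeral_2_eq_2)
  then have la: "last (f TU # xs) \<noteq> f TV"
    using pr[OF V(5)[of "n-1"] V(2) edges(7)[OF n]] n by auto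
  have a: "f (TI 0 1) \<in> L (TI 0 1) - {f TU, f TV}"
    using inL[OF V(3)] pr[OF V(1) V(3) edges(1)] pr[OF V(3) V(2) edges(2)] by auto
  have b: "f (TI 1 1) \<in> L (TI 1 1) - {f TU, f TV}"
    using inL[OF V(4)] pr[OF V(1) V(4) edges(3)] pr[OF V(4) V(2) edges(4)] by auto
  show ?thesis unfolding Tset_def phi_def
    using inL[OF V(1)] inL[OF V(2)] a b pc la by (auto simp: xs_def Ls_def)
qed

lemma mk_in:
  assumes n: "n \<ge> 2" and t: "(c1, c2, xa, xb, xs) \<in> Tset n L"
  shows "mkcol n c1 c2 xa xb xs \<in> list_colorings (theta_verts 2 2 n) (theta_edge 2 2 n) L \<and>
         phi n (mkcol n c1 c2 xa xb xs) = (c1, c2, xa, xb, xs)"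
proof -
  let ?V = "theta_verts 2 2 n" and ?E = "theta_edge 2 2 n"
  let ?f = "mkcol n c1 c2 xa xb xs"
  define Ls where "Ls = map (\<lambda>i. L (TI 2 i)) [1..<n]"
  have c: "c1 \<in> L TU" "c2 \<in> L TV" and xa: "xa \<in> L (TI 0 1)" "xa \<noteq> c1" "xa \<noteq> c2"
    and xb: "xb \<in> L (TI 1 1)" "xb \<noteq> c1" "xb \<noteq> c2"
    and xs: "xs \<in> pathcol c1 Ls" and la: "last (c1#xs) \<noteq> c2"
    using t by (auto simp: Tset_def Ls_def)
  have lLs: "length Ls = n - 1" by (simp add: Ls_def)
  have lxs: "length xs = n - 1" and xsL: "\<And>i. i < n - 1 \<Longrightarrow> xs!i \<in> Ls!i"
    using xs lLs by (auto simp: pathcol_def)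
  have LsN: "\<And>i. i < n - 1 \<Longrightarrow> Ls!i = L (TI 2 (Suc i))" by (auto simp: Ls_def nth_map_upt)
  have col: "?f \<in> list_colorings ?V ?E L"
    unfolding list_colorings_def
  proof (intro CollectI conjI ballI allI impI)
    fix x assume x: "x \<in> ?V"
    then consider "x = TU" | "x = TV" | "x = TI 0 1" | "x = TI 1 1" | j where "x = TI 2 j" "1 \<le> j" "j < n"
      unfolding verts_char by blast
    then show "?f x \<in> L x"
    proof cases
      case 5
      then have "j - 1 < n - 1" by simp
      then show ?thesis using 5 x xsL[of "j-1"] LsN[of "j-1"] by (simp add: mkcol_def)
    qed (use x c xa xb in \<open>auto simp: mkcol_def\<close>)
  next
    fix x y assume x: "x \<in> ?V" and y: "y \<in> ?V" and e: "?E x y"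
    then obtain i a b where i: "i < 3" and pa: "theta_pos 2 2 n i x = Some a"
      and pb: "theta_pos 2 2 n i y = Some b" and ab: "b = a + 1 \<or> a = b + 1"
      unfolding theta_edge_def by blast
    have fx: "?f x = seqc n c1 c2 xa xb xs i a" "a \<le> theta_len 2 2 n i" using pos_seq[OF n i pa, of c1 c2 xa xb xs] by auto
    have fy: "?f y = seqc n c1 c2 xa xb xs i b" "b \<le> theta_len 2 2 n i" using pos_seq[OF n i pb, of c1 c2 xa xb xs] by auto
    from ab show "?f x \<noteq> ?f y"
    proof
      assume "b = a + 1"
      then show ?thesis using seq_adj[OF n xa(2,3) xb(2,3) xs lLs la i, of a] fx fy by auto
    next
      assume "a = b + 1"
      then show ?thesis using seq_adj[OF n xa(2,3) xb(2,3) xs lLs la i, of b] fx fy by auto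
    qed
  next
    fix x assume "x \<notin> ?V"
    then show "?f x = undefined" by (simp add: mkcol_def)
  qed
  have "map (\<lambda>i. ?f (TI 2 i)) [1..<n] = xs"
  proof (rule nth_equalityI)
    show "length (map (\<lambda>i. ?f (TI 2 i)) [1..<n]) = length xs" using lxs by simp
  next
    fix i assume "i < length (map (\<lambda>i. ?f (TI 2 i)) [1..<n])"
    then have i: "i < n - 1" by simp
    then have "TI 2 (Suc i) \<in> ?V" by (auto simp: verts_char)
    then show "map (\<lambda>i. ?f (TI 2 i)) [1..<n] ! i = xs ! i" using i by (simp add: mkcol_def nth_map_upt)
  qed
  moreover have "TU \<in> ?V" "TV \<in> ?V" "TI 0 1 \<in> ?V" "TI 1 1 \<in> ?V" by (auto simp: verts_char)
  ultimately have "phi n ?f = (c1, c2, xa, xb, xs)" by (simp add: phi_def mkcol_def)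
  then show ?thesis using col by simp
qed

lemma decomp:
  fixes L :: "tvert \<Rightarrow> 'c set"
  assumes n: "n \<ge> 2" and fin: "\<forall>x\<in>theta_verts 2 2 n. finite (L x)"
  shows "card (list_colorings (theta_verts 2 2 n) (theta_edge 2 2 n) L) =
    (\<Sum>c1\<in>L TU. \<Sum>c2\<in>L TV. card (L (TI 0 1) - {c1,c2}) * card (L (TI 1 1) - {c1,c2})
        * Qc c1 c2 (map (\<lambda>i. L (TI 2 i)) [1..<n]))"
proof -
  let ?C = "list_colorings (theta_verts 2 2 n) (theta_edge 2 2 n) L"
  have img: "phi n ` ?C = Tset n L"
  proof
    show "phi n ` ?C \<subseteq> Tset n L" using phi_into[OF n] by auto
  next
    show "Tset n L \<subseteq> phi n ` ?C"
    proof
      fix t assume t: "t \<in> Tset n L"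
      obtain c1 c2 xa xb xs where e: "t = (c1, c2, xa, xb, xs)" by (cases t) auto
      show "t \<in> phi n ` ?C" using mk_in[OF n t[unfolded e]] e by (metis image_eqI)
    qed
  qed
  have "card ?C = card (Tset n L)" using card_image[OF phi_inj] img by metis
  also have "\<dots> = (\<Sum>c1\<in>L TU. \<Sum>c2\<in>L TV. card (L (TI 0 1) - {c1,c2}) * card (L (TI 1 1) - {c1,c2})
        * Qc c1 c2 (map (\<lambda>i. L (TI 2 i)) [1..<n]))"
  proof -
    have V: "TU \<in> theta_verts 2 2 n" "TV \<in> theta_verts 2 2 n" "TI 0 1 \<in> theta_verts 2 2 n" "TI 1 1 \<in> theta_verts 2 2 n"
      by (auto simp: verts_char)
    have fL: "finite (L TU)" "finite (L TV)" "finite (L (TI 0 1))" "finite (L (TI 1 1))"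
      using fin V by auto
    have fLs: "\<forall>A\<in>set (map (\<lambda>i. L (TI 2 i)) [1..<n]). finite A"
      using fin by (auto simp: verts_char)
    have fP: "finite {xs \<in> pathcol c1 (map (\<lambda>i. L (TI 2 i)) [1..<n]). last (c1#xs) \<noteq> c2}" for c1 c2
      using pathcol_finite[OF fLs] by auto
    show ?thesis unfolding Tset_def Qc_def
      using fL fP by (simp add: card_SigmaI card_cartesian_product finite_SigmaI mult.assoc)
  qed
  finally show ?thesis .
qed

lemma card_int2: "int (card (La \<inter> {c1,c2})) =
   (if c1 \<in> La then 1 else 0) + (if c2 \<in> La then 1 else 0) - (if c1 = c2 \<and> c2 \<in> La then 1 else 0)"
  by (cases "c1 \<in> La"; cases "c2 \<in> La"; cases "c1 = c2") (auto simp: Int_insert_right)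

lemma a_sum:
  fixes Lu Lv La :: "'c set"
  assumes f: "finite Lu" "finite Lv" "finite La" and c: "card Lu = m" "card Lv = m" "card La = m"
    and ne: "Lu \<noteq> Lv"
  shows "(\<Sum>c1\<in>Lu. \<Sum>c2\<in>Lv. 2 - int (card (La \<inter> {c1,c2}))) \<ge> 2 * int m - 1"
proof -
  have s1: "(\<Sum>c1\<in>Lu. \<Sum>c2\<in>Lv. (if c1 \<in> La then 1 else 0::int)) = int m * int (card (Lu \<inter> La))"
    using f c by (simp add: sum_distrib_left[symmetric] sum.If_cases Int_def)
  have s2: "(\<Sum>c1\<in>Lu. \<Sum>c2\<in>Lv. (if c2 \<in> La then 1 else 0::int)) = int m * int (card (Lv \<inter> La))"
    using f c by (simp add: sum.If_cases Int_def)
  have s3: "(\<Sum>c1\<in>Lu. \<Sum>c2\<in>Lv. (if c1 = c2 \<and> c2 \<in> La then 1 else 0::int)) = int (card (Lu \<inter> Lv \<inter> La))"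
  proof -
    have "(\<Sum>c1\<in>Lu. \<Sum>c2\<in>Lv. (if c1 = c2 \<and> c2 \<in> La then 1 else 0::int)) =
          (\<Sum>c1\<in>Lu. if c1 \<in> Lv \<and> c1 \<in> La then 1 else 0)"
    proof (intro sum.cong refl)
      fix c1 assume "c1 \<in> Lu"
      have "(\<Sum>c2\<in>Lv. (if c1 = c2 \<and> c2 \<in> La then 1 else 0::int)) =
            (\<Sum>c2\<in>Lv. if c2 = c1 then (if c1 \<in> La then 1 else 0) else 0)"
        by (intro sum.cong) auto
      also have "\<dots> = (if c1 \<in> Lv \<and> c1 \<in> La then 1 else 0)" using f by (simp add: sum.delta')
      finally show "(\<Sum>c2\<in>Lv. (if c1 = c2 \<and> c2 \<in> La then 1 else 0::int)) = (if c1 \<in> Lv \<and> c1 \<in> La then 1 else 0)" .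
    qed
    also have "\<dots> = int (card (Lu \<inter> Lv \<inter> La))" using f by (simp add: sum.If_cases Int_def conj_commute) (metis (no_types, lifting) Collect_cong)
    finally show ?thesis .
  qed
  have e: "(\<Sum>c1\<in>Lu. \<Sum>c2\<in>Lv. 2 - int (card (La \<inter> {c1,c2}))) =
     2 * int m * int m - int m * int (card (Lu \<inter> La)) - int m * int (card (Lv \<inter> La)) + int (card (Lu \<inter> Lv \<inter> La))"
  proof -
    have "(\<Sum>c1\<in>Lu. \<Sum>c2\<in>Lv. 2 - int (card (La \<inter> {c1,c2}))) =
      (\<Sum>c1\<in>Lu. \<Sum>c2\<in>Lv. (2::int)) - (\<Sum>c1\<in>Lu. \<Sum>c2\<in>Lv. (if c1 \<in> La then 1 else 0::int))
      - (\<Sum>c1\<in>Lu. \<Sum>c2\<in>Lv. (if c2 \<in> La then 1 else 0::int))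
      + (\<Sum>c1\<in>Lu. \<Sum>c2\<in>Lv. (if c1 = c2 \<and> c2 \<in> La then 1 else 0::int))"
      unfolding card_int2 by (simp only: sum_subtractf sum.distrib diff_diff_eq2 diff_add_eq diff_diff_eq)
    then show ?thesis unfolding s1 s2 s3 using c by simp
  qed
  define t where "t = card (Lu \<inter> Lv \<inter> La)"
  have un: "card (Lu \<inter> La) + card (Lv \<inter> La) = card ((Lu \<inter> La) \<union> (Lv \<inter> La)) + t"
    unfolding t_def using f card_Un_Int[of "Lu \<inter> La" "Lv \<inter> La"] by (simp add: Int_ac)
  have "card ((Lu \<inter> La) \<union> (Lv \<inter> La)) \<le> m" using f c by (metis card_mono Int_Un_distrib2 inf.cobounded2)
  then have un2: "int (card (Lu \<inter> La)) + int (card (Lv \<inter> La)) \<le> int m + int t" using un by linarith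
  have "Lu \<inter> Lv \<noteq> Lu"
  proof
    assume "Lu \<inter> Lv = Lu"
    then have "Lu \<subseteq> Lv" by auto
    then show False using ne f c by (metis card_subset_eq)
  qed
  then have "card (Lu \<inter> Lv) < m" using f c by (metis Int_lower1 psubsetI psubset_card_mono)
  moreover have "t \<le> card (Lu \<inter> Lv)" unfolding t_def using f by (intro card_mono) auto
  ultimately have tm: "int t \<le> int m - 1" by linarith
  have "(int m - 1) * int t \<le> (int m - 1) * (int m - 1)" using tm c f
    by (intro mult_left_mono) (auto simp: card_gt_0_iff)
  then have "2 * int m * int m - int m * (int m + int t) + int t \<ge> 2 * int m - 1"
    by (simp add: algebra_simps)
  moreover have "int m * (int (card (Lu \<inter> La)) + int (card (Lv \<inter> La))) \<le> int m * (int m + int t)"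
    using un2 by (intro mult_left_mono) auto
  ultimately show ?thesis unfolding e t_def[symmetric] by (simp add: algebra_simps)
qed


lemma AB_bound:
  fixes Lu Lv La Lb :: "'c set"
  assumes f: "finite Lu" "finite Lv" "finite La" "finite Lb"
    and c: "card Lu = m" "card Lv = m" "card La = m" "card Lb = m" and m2: "m \<ge> 2"
    and ne: "Lu \<noteq> Lv"
  shows "(\<Sum>c1\<in>Lu. \<Sum>c2\<in>Lv. int (card (La - {c1,c2}) * card (Lb - {c1,c2})))
         \<ge> int m * int m * (int m - 2)^2 + (int m - 2) * (4 * int m - 2)"
proof -
  define a where "a c1 c2 = 2 - int (card (La \<inter> {c1,c2}))" for c1 c2
  define b where "b c1 c2 = 2 - int (card (Lb \<inter> {c1,c2}))" for c1 c2
  have le2: "card (X \<inter> {c1,c2}) \<le> 2" for X :: "'c set" and c1 c2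
  proof -
    have "card (X \<inter> {c1,c2}) \<le> card {c1,c2}" by (intro card_mono) auto
    also have "\<dots> \<le> 2" by (cases "c1 = c2") auto
    finally show ?thesis .
  qed
  have A: "int (card (La - {c1,c2})) = int m - 2 + a c1 c2" for c1 c2
  proof -
    have "card (La - {c1,c2}) = card La - card (La \<inter> {c1,c2})" using f by (simp add: card_Diff_subset_Int)
    moreover have "card (La \<inter> {c1,c2}) \<le> card La" using f by (simp add: card_mono)
    ultimately show ?thesis using c by (simp add: a_def of_nat_diff)
  qed
  have B: "int (card (Lb - {c1,c2})) = int m - 2 + b c1 c2" for c1 c2
  proof -
    have "card (Lb - {c1,c2}) = card Lb - card (Lb \<inter> {c1,c2})" using f by (simp add: card_Diff_subset_Int)
    moreover have "card (Lb \<inter> {c1,c2}) \<le> card Lb" using f by (simp add: card_mono)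
    ultimately show ?thesis using c by (simp add: b_def of_nat_diff)
  qed
  have a0: "a c1 c2 \<ge> 0" "b c1 c2 \<ge> 0" for c1 c2 using le2 by (auto simp: a_def b_def)
  have pt: "int (card (La - {c1,c2}) * card (Lb - {c1,c2})) \<ge> (int m - 2)^2 + (int m - 2) * (a c1 c2 + b c1 c2)" for c1 c2
  proof -
    have "int (card (La - {c1,c2}) * card (Lb - {c1,c2})) = (int m - 2 + a c1 c2) * (int m - 2 + b c1 c2)"
      using A B by simp
    also have "\<dots> = (int m - 2)^2 + (int m - 2) * (a c1 c2 + b c1 c2) + a c1 c2 * b c1 c2"
      by (simp add: algebra_simps power2_eq_square)
    finally show ?thesis using a0[of c1 c2] by (simp add: zero_le_mult_iff)
  qed
  have "(\<Sum>c1\<in>Lu. \<Sum>c2\<in>Lv. int (card (La - {c1,c2}) * card (Lb - {c1,c2})))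
        \<ge> (\<Sum>c1\<in>Lu. \<Sum>c2\<in>Lv. (int m - 2)^2 + (int m - 2) * (a c1 c2 + b c1 c2))"
    by (intro sum_mono pt)
  also have "(\<Sum>c1\<in>Lu. \<Sum>c2\<in>Lv. (int m - 2)^2 + (int m - 2) * (a c1 c2 + b c1 c2)) =
      int m * int m * (int m - 2)^2 + (int m - 2) * ((\<Sum>c1\<in>Lu. \<Sum>c2\<in>Lv. a c1 c2) + (\<Sum>c1\<in>Lu. \<Sum>c2\<in>Lv. b c1 c2))"
    using c by (simp add: sum.distrib sum_distrib_left distrib_left)
  finally have 1: "(\<Sum>c1\<in>Lu. \<Sum>c2\<in>Lv. int (card (La - {c1,c2}) * card (Lb - {c1,c2}))) \<ge>
      int m * int m * (int m - 2)^2 + (int m - 2) * ((\<Sum>c1\<in>Lu. \<Sum>c2\<in>Lv. a c1 c2) + (\<Sum>c1\<in>Lu. \<Sum>c2\<in>Lv. b c1 c2))" .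
  have sa: "(\<Sum>c1\<in>Lu. \<Sum>c2\<in>Lv. a c1 c2) \<ge> 2 * int m - 1"
    unfolding a_def using a_sum[OF f(1,2,3) c(1,2,3) ne] .
  have sb: "(\<Sum>c1\<in>Lu. \<Sum>c2\<in>Lv. b c1 c2) \<ge> 2 * int m - 1"
    unfolding b_def using a_sum[OF f(1,2,4) c(1,2,4) ne] .
  have "(int m - 2) * ((\<Sum>c1\<in>Lu. \<Sum>c2\<in>Lv. a c1 c2) + (\<Sum>c1\<in>Lu. \<Sum>c2\<in>Lv. b c1 c2)) \<ge> (int m - 2) * (4 * int m - 2)"
    using sa sb m2 by (intro mult_left_mono) auto
  then show ?thesis using 1 by linarith
qed

lemma Dd_lower: assumes "m \<ge> 2" shows "Dd m (j + 2) \<ge> (m-1)^j * (m-2)"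
proof -
  have "Dd m (j+2) = (m-1)^(j+1) - ((m-1)^j - Dd m j)" by (simp add: Dd.simps)
  moreover have "Dd m j \<ge> 0" using Dd_nonneg assms by simp
  ultimately have "Dd m (j+2) \<ge> (m-1)^(j+1) - (m-1)^j" by linarith
  also have "(m-1)^(j+1) - (m-1)^j = (m-1)^j * (m-2)" by (simp add: algebra_simps)
  finally show ?thesis .
qed

lemma final_ineq:
  fixes m D :: int
  assumes m: "m \<ge> 4" and D: "D \<ge> (m-1)^2 * (m-2)"
  shows "D * (m * m * (m - 2)^2 + (m - 2) * (4 * m - 2)) \<ge> m * ((m-1)^2 * (D+1) + (m-1) * (m-2)^2 * D)"
proof -
  have e: "D * (m * m * (m - 2)^2 + (m - 2) * (4 * m - 2)) - m * ((m-1)^2 * (D+1) + (m-1) * (m-2)^2 * D)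
         = D * (2*m^2 - 7*m + 4) - m * (m-1)^2"
    by (simp add: algebra_simps power2_eq_square)
  obtain j :: nat where j: "m = int j + 4" using m by (metis add.commute le_add_diff_inverse nonneg_int_cases le_diff_eq diff_ge_0_iff_ge)
  have p: "2*m^2 - 7*m + 4 \<ge> 0" using j by (simp add: algebra_simps power2_eq_square)
  have "D * (2*m^2 - 7*m + 4) \<ge> (m-1)^2 * (m-2) * (2*m^2 - 7*m + 4)"
    using D p by (intro mult_right_mono) auto
  moreover have "(m-1)^2 * (m-2) * (2*m^2 - 7*m + 4) \<ge> m * (m-1)^2"
  proof -
    have "(m-2) * (2*m^2 - 7*m + 4) \<ge> m"
    proof -
      have "(m-2) * (2*m^2 - 7*m + 4) - m = 2 * int j^3 + 13 * int j^2 + 25 * int j + 12"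
        using j by (simp add: algebra_simps power2_eq_square power3_eq_cube)
      moreover have "2 * int j^3 + 13 * int j^2 + 25 * int j + 12 \<ge> 0" by simp
      ultimately show ?thesis by linarith
    qed
    then have "(m-1)^2 * ((m-2) * (2*m^2 - 7*m + 4)) \<ge> (m-1)^2 * m"
      by (intro mult_left_mono) auto
    then show ?thesis by (simp add: algebra_simps)
  qed
  ultimately show ?thesis using e by linarith
qed


theorem lemma24:
  fixes k m :: nat and L :: "tvert \<Rightarrow> 'c set"
  assumes "k \<ge> 2" and "m \<ge> 4"
    and "is_m_assignment (theta_verts 2 2 (2*k)) m L"
    and "L TU \<noteq> L TV"
  shows "num_list_colorings (theta_verts 2 2 (2*k)) (theta_edge 2 2 (2*k)) L
         \<ge> chrom_poly (theta_verts 2 2 (2*k)) (theta_edge 2 2 (2*k)) m"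
proof -
  define n where "n = 2 * k"
  have n4: "n \<ge> 4" and nev: "even n" using assms(1) by (auto simp: n_def)
  have n2: "n \<ge> 2" using n4 by simp
  have m2: "m \<ge> 2" using assms(2) by simp
  let ?V = "theta_verts 2 2 n" and ?E = "theta_edge 2 2 n"
  have Lx: "\<And>x. x \<in> ?V \<Longrightarrow> finite (L x) \<and> card (L x) = m"
    using assms(3) by (auto simp: is_m_assignment_def n_def)
  have V: "TU \<in> ?V" "TV \<in> ?V" "TI 0 1 \<in> ?V" "TI 1 1 \<in> ?V" "\<And>j. 1 \<le> j \<Longrightarrow> j < n \<Longrightarrow> TI 2 j \<in> ?V"
    by (auto simp: verts_char)
  define Ls where "Ls = map (\<lambda>i. L (TI 2 i)) [1..<n]"
  have LsP: "\<forall>A\<in>set Ls. finite A \<and> card A = m" using Lx V(5) by (auto simp: Ls_def)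
  have lLs: "length Ls + 1 = n" using n2 by (simp add: Ls_def)
  define D where "D = Dd (int m) n"
  have Dnn: "D \<ge> 0" using Dd_nonneg[of "int m" n] m2 by (simp add: D_def)
  have epsn: "eps n = 0" using nev by (simp add: eps_def)
  have Q: "int (Qc c1 c2 Ls) \<ge> D" for c1 c2
  proof -
    have "int (card {c1}) * Dd (int m) (length Ls + 1) \<le> (\<Sum>c\<in>{c1}. int (Qc c c2 Ls)) + eps (length Ls + 1)"
      using conjunct2[OF path_inv[OF m2 LsP, of c2]] m2 by auto
    then show ?thesis using lLs epsn by (simp add: D_def)
  qed
  have fin: "\<forall>x\<in>?V. finite (L x)" using Lx by auto
  have PL: "int (card (list_colorings ?V ?E L)) =
      (\<Sum>c1\<in>L TU. \<Sum>c2\<in>L TV. int (card (L (TI 0 1) - {c1,c2}) * card (L (TI 1 1) - {c1,c2})) * int (Qc c1 c2 Ls))"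
    unfolding decomp[OF n2 fin] Ls_def by simp
  also have "\<dots> \<ge> (\<Sum>c1\<in>L TU. \<Sum>c2\<in>L TV. int (card (L (TI 0 1) - {c1,c2}) * card (L (TI 1 1) - {c1,c2})) * D)"
    by (intro sum_mono mult_left_mono Q) auto
  finally have PL1: "int (card (list_colorings ?V ?E L)) \<ge>
      D * (\<Sum>c1\<in>L TU. \<Sum>c2\<in>L TV. int (card (L (TI 0 1) - {c1,c2}) * card (L (TI 1 1) - {c1,c2})))"
    by (simp add: sum_distrib_left mult.commute)
  have AB: "(\<Sum>c1\<in>L TU. \<Sum>c2\<in>L TV. int (card (L (TI 0 1) - {c1,c2}) * card (L (TI 1 1) - {c1,c2})))
         \<ge> int m * int m * (int m - 2)^2 + (int m - 2) * (4 * int m - 2)"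
    using AB_bound[of "L TU" "L TV" "L (TI 0 1)" "L (TI 1 1)" m] Lx[OF V(1)] Lx[OF V(2)] Lx[OF V(3)] Lx[OF V(4)]
      m2 assms(4) by auto
  have PL2: "int (card (list_colorings ?V ?E L)) \<ge> D * (int m * int m * (int m - 2)^2 + (int m - 2) * (4 * int m - 2))"
    using PL1 mult_left_mono[OF AB Dnn] by linarith
  define F where "F = {0..<m}"
  define Lf where "Lf = map (\<lambda>i. F) [1..<n]"
  have finF: "\<forall>x\<in>?V. finite ((\<lambda>_. F) x)" by (simp add: F_def)
  have X: "(int m - 1)^n - (int m - 1) * D = D + 1"
    using Dd_closed[of "int m" n] nev by (simp add: D_def algebra_simps)
  have Qf: "int (Qc c1 c2 Lf) = (if c1 = c2 then D + 1 else D)" if "c1 < m" "c2 < m" for c1 c2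
  proof -
    have "\<forall>L\<in>set Lf. L = {0..<m}" by (simp add: Lf_def F_def)
    from path_full[OF _ that(2) this] that(1) m2
    have "int (Qc c1 c2 Lf) = (if c1 = c2 then (int m - 1)^(length Lf + 1) - (int m - 1) * Dd (int m) (length Lf + 1)
                                    else Dd (int m) (length Lf + 1))" by auto
    moreover have "length Lf + 1 = n" using n2 by (simp add: Lf_def)
    ultimately show ?thesis using X by (simp add: D_def)
  qed
  have inner: "(\<Sum>c2\<in>F. int (card (F - {c1,c2}) * card (F - {c1,c2})) * int (Qc c1 c2 Lf))
      = (int m - 1)^2 * (D+1) + (int m - 1) * (int m - 2)^2 * D" if c1: "c1 \<in> F" for c1
  proof -
    have "(\<Sum>c2\<in>F. int (card (F - {c1,c2}) * card (F - {c1,c2})) * int (Qc c1 c2 Lf))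
        = (\<Sum>c2\<in>F. if c2 = c1 then (int m - 1)^2 * (D+1) else (int m - 2)^2 * D)"
    proof (intro sum.cong refl)
      fix c2 assume c2: "c2 \<in> F"
      show "int (card (F - {c1,c2}) * card (F - {c1,c2})) * int (Qc c1 c2 Lf) =
            (if c2 = c1 then (int m - 1)^2 * (D+1) else (int m - 2)^2 * D)"
      proof (cases "c2 = c1")
        case True
        have "card (F - {c1,c2}) = m - 1" using True c1 by (simp add: F_def)
        then show ?thesis using True Qf[of c1 c2] c1 c2 m2 by (simp add: F_def of_nat_diff power2_eq_square)
      next
        case False
        have "card (F - {c1,c2}) = m - 2" using False c1 c2 by (simp add: F_def card_Diff_subset)
        then show ?thesis using False Qf[of c1 c2] c1 c2 m2 by (simp add: F_def of_nat_diff power2_eq_square)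
      qed
    qed
    also have "\<dots> = (int m - 1)^2 * (D+1) + (\<Sum>c2\<in>F-{c1}. (int m - 2)^2 * D)"
    proof -
      have fF: "finite F" by (simp add: F_def)
      have "(\<Sum>c2\<in>F. if c2 = c1 then (int m - 1)^2 * (D+1) else (int m - 2)^2 * D) =
            (if c1 = c1 then (int m - 1)^2 * (D+1) else (int m - 2)^2 * D) +
            (\<Sum>c2\<in>F-{c1}. if c2 = c1 then (int m - 1)^2 * (D+1) else (int m - 2)^2 * D)"
        by (rule sum.remove[OF fF c1])
      moreover have "(\<Sum>c2\<in>F-{c1}. if c2 = c1 then (int m - 1)^2 * (D+1) else (int m - 2)^2 * D) =
                     (\<Sum>c2\<in>F-{c1}. (int m - 2)^2 * D)" by (intro sum.cong) auto
      ultimately show ?thesis by simp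
    qed
    also have "\<dots> = (int m - 1)^2 * (D+1) + (int m - 1) * (int m - 2)^2 * D"
      using c1 m2 by (simp add: F_def of_nat_diff)
    finally show ?thesis .
  qed
  have Pm: "int (card (list_colorings ?V ?E (\<lambda>_. F))) =
      int m * ((int m - 1)^2 * (D+1) + (int m - 1) * (int m - 2)^2 * D)"
  proof -
    have "int (card (list_colorings ?V ?E (\<lambda>_. F))) =
        (\<Sum>c1\<in>F. \<Sum>c2\<in>F. int (card (F - {c1,c2}) * card (F - {c1,c2})) * int (Qc c1 c2 Lf))"
      unfolding decomp[OF n2 finF] Lf_def by simp
    also have "\<dots> = (\<Sum>c1\<in>F. (int m - 1)^2 * (D+1) + (int m - 1) * (int m - 2)^2 * D)"
      by (intro sum.cong refl inner)
    finally show ?thesis by (simp add: F_def)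
  qed
  have Dlow: "D \<ge> (int m - 1)^2 * (int m - 2)"
  proof -
    have a: "Dd (int m) (n - 2 + 2) \<ge> (int m - 1)^(n-2) * (int m - 2)" by (rule Dd_lower) (use m2 in simp)
    have "(int m - 1)^(n-2) \<ge> (int m - 1)^2" using n4 m2 by (intro power_increasing) auto
    then have b: "(int m - 1)^(n-2) * (int m - 2) \<ge> (int m - 1)^2 * (int m - 2)"
      using m2 by (intro mult_right_mono) auto
    have "n - 2 + 2 = n" using n2 by simp
    then show ?thesis unfolding D_def using a b by simp
  qed
  have "int (card (list_colorings ?V ?E (\<lambda>_. F))) \<le> int (card (list_colorings ?V ?E L))"
  proof -
    have "int m \<ge> 4" using assms(2) by simp
    from final_ineq[OF this Dlow] show ?thesis using Pm PL2 by linarith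
  qed
  then show ?thesis unfolding num_list_colorings_def chrom_poly_def n_def[symmetric] F_def by simp
qed

end
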